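(* Let $\Omega_h\subset\mathbb{R}^2$ be a simply connected polygon with a regular triangulation $\mathcal{T}_h$, and let $x^{(1)},\dots,x^{(N)}$ be its boundary vertices in counterclockwise order, $X=(x^{(1)},\dots,x^{(N)})$. Let $t^0>0$, $\mu,\lambda,\delta>0$, $M>0$, and let $\ell:\mathcal{S}^1(\mathcal{T}_h)^2\to\mathbb{R}$ be a linear functional (the discrete shape derivative $J_h'(\Omega_h;\cdot)$). Let $(V_h,F_h)$ be a solution of the convex quadratic program \[ \begin{aligned} &\text{minimize } \tfrac12\mathcal{E}_h(V_h,V_h)+\ell(V_h) \text{ over } V_h\in\mathcal{S}^1(\mathcal{T}_h)^2,\ F_h\in\mathcal{S}^1(\partial\mathcal{T}_h),\\ &\text{s.t. } C_i(X)+t^0\,DC_i(X)\,V_h(X)\le 0\ (i=1,\dots,N),\qquad \mathcal{E}_h(V_h,W_h)=\int_{\partial\Omega_h}F_h\,(W_h\cdot n)\,ds\ \ \forall W_h\in\mathcal{S}^1(\mathcal{T}_h)^2, \end{aligned} \] with $V_h\ne0$, and let $\lambda=(\lambda_1,\dots,\lambda_N)\in\mathbb{R}^N$ be a Lagrange multiplier for $V_h$ associated with the linearized convexity constraints. If $M\ge t^0\sup_{i=1,\dots,N}\lambda_i$, then \[ \varphi'(0):=\ell(V_h)+M\sum_{i:\,C_i(X)=0}\bigl[DC_i(X)V_h(X)\bigr]^+ + M\sum_{i:\,C_i(X)>0}DC_i(X)V_h(X)<0 . \]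
   Context: $\mathcal{S}^1(\mathcal{T}_h)$ denotes continuous elementwise affine functions on $\mathcal{T}_h$, $\mathcal{S}^1(\partial\mathcal{T}_h)$ continuous piecewise affine functions on $\partial\Omega_h$, $n$ the outer unit normal. $\mathcal{E}_h(V,W)=\int_{\Omega_h}2\mu\,\varepsilon(V):\varepsilon(W)+\lambda\,\mathrm{tr}\,\varepsilon(V)\,\mathrm{tr}\,\varepsilon(W)+\delta\,V\cdot W\,dx$ with $\varepsilon(V)=(DV+DV^\top)/2$ (here $\lambda$ in $\mathcal{E}_h$ is the Lamé parameter, distinct from the multiplier vector). With conventions $x^{(0)}=x^{(N)}$, $x^{(N+1)}=x^{(1)}$, $C_i(X)=(x^{(i-1)}_1-x^{(i)}_1)(x^{(i+1)}_2-x^{(i)}_2)-(x^{(i-1)}_2-x^{(i)}_2)(x^{(i+1)}_1-x^{(i)}_1)$, and $DC_i(X)V_h(X)$ denotes the derivative of $C_i$ at $X$ applied to the vector $(V_h(x^{(1)}),\dots,V_h(x^{(N)}))$. A Lagrange multiplier means: there exist $\lambda\in\mathbb{R}^N$ and $W_h\in\mathcal{S}^1(\mathcal{T}_h)^2$ with $\mathcal{E}_h(V_h,\delta V)+\ell(\delta V)+\sum_i\lambda_i t^0 DC_i(X)\delta V(X)+\mathcal{E}_h(\delta V,W_h)=0$ for all $\delta V\in\mathcal{S}^1(\mathcal{T}_h)^2$, $\int_{\partial\Omega_h}\delta F\,(W_h\cdot n)\,ds=0$ for all $\delta F\in\mathcal{S}^1(\partial\mathcal{T}_h)$, and $0\le\lambda_i\perp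 C_i(X)+t^0DC_i(X)V_h(X)\le0$ for all $i$. The quantity $\varphi'(0)$ is the one-sided derivative at $0$ of the merit function $\varphi(t)=J_h((I+tV_h)(\Omega_h))+M\sum_i[C_i(X+tV_h(X))]^+$ when $\ell=J_h'(\Omega_h;\cdot)$. *)

theory Defs
  imports "HOL-Analysis.Analysis"
begin

type_synonym pt = "real^2"

definition tri_vertices :: "pt set \<Rightarrow> pt set" where
  "tri_vertices K = {v. v extreme_point_of K}"

definition is_triangle :: "pt set \<Rightarrow> bool" where
  "is_triangle K \<longleftrightarrow> (\<exists>a b c. K = convex hull {a, b, c} \<and> \<not> collinear {a, b, c})"

definition regular_triangulation :: "pt set set \<Rightarrow> bool" where
  "regular_triangulation T \<longleftrightarrow> finite T \<and> T \<noteq> {} \<and> (\<forall>K\<in>T. is_triangle K) \<and>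
     (\<forall>K\<in>T. \<forall>K'\<in>T. K \<noteq> K' \<longrightarrow>
        K \<inter> K' = convex hull (tri_vertices K \<inter> tri_vertices K'))"

definition mesh_vertices :: "pt set set \<Rightarrow> pt set" where
  "mesh_vertices T = (\<Union>K\<in>T. tri_vertices K)"

definition domain :: "pt set set \<Rightarrow> pt set" where
  "domain T = \<Union>T"

definition cyc :: "nat \<Rightarrow> (nat \<Rightarrow> pt) \<Rightarrow> nat \<Rightarrow> pt" where
  "cyc N X i = X (if i = 0 then N else if i = N + 1 then 1 else i)"

definition ccw_boundary_vertices :: "pt set set \<Rightarrow> nat \<Rightarrow> (nat \<Rightarrow> pt) \<Rightarrow> bool" where
  "ccw_boundary_vertices T N X \<longleftrightarrow>
     N \<ge> 3 \<and> inj_on X {1..N} \<and>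
     X ` {1..N} = {v \<in> mesh_vertices T. v \<in> frontier (domain T)} \<and>
     frontier (domain T) = (\<Union>i\<in>{1..N}. closed_segment (cyc N X i) (cyc N X (i+1))) \<and>
     (\<forall>i\<in>{1..N}. \<forall>j\<in>{1..N}. i \<noteq> j \<longrightarrow>
        closed_segment (cyc N X i) (cyc N X (i+1)) \<inter> closed_segment (cyc N X j) (cyc N X (j+1))
        \<subseteq> {cyc N X i, cyc N X (i+1)} \<inter> {cyc N X j, cyc N X (j+1)}) \<and>
     (\<Sum>i=1..N. (cyc N X i)$1 * (cyc N X (i+1))$2 - (cyc N X (i+1))$1 * (cyc N X i)$2) > 0"

definition S1 :: "pt set set \<Rightarrow> (pt \<Rightarrow> real) set" where
  "S1 T = {f. continuous_on (domain T) f \<and>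
              (\<forall>K\<in>T. \<exists>a b. \<forall>x\<in>K. f x = a \<bullet> x + b)}"

definition S1vec :: "pt set set \<Rightarrow> (pt \<Rightarrow> pt) set" where
  "S1vec T = {V. \<forall>k. (\<lambda>x. V x $ k) \<in> S1 T}"

definition S1bd :: "nat \<Rightarrow> (nat \<Rightarrow> pt) \<Rightarrow> (pt \<Rightarrow> real) set" where
  "S1bd N X = {F. \<forall>i\<in>{1..N}. \<forall>s\<in>{0..1::real}.
      F (cyc N X i + s *\<^sub>R (cyc N X (i+1) - cyc N X i))
        = (1 - s) * F (cyc N X i) + s * F (cyc N X (i+1))}"

definition jac :: "(pt \<Rightarrow> pt) \<Rightarrow> pt \<Rightarrow> real^2^2" where
  "jac V x = matrix (frechet_derivative V (at x))"

definition strain :: "(pt \<Rightarrow> pt) \<Rightarrow> pt \<Rightarrow> real^2^2" where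
  "strain V x = (1/2) *\<^sub>R (jac V x + transpose (jac V x))"

definition frob :: "real^2^2 \<Rightarrow> real^2^2 \<Rightarrow> real" where
  "frob A B = (\<Sum>i\<in>UNIV. \<Sum>j\<in>UNIV. A$i$j * B$i$j)"

definition mtrace :: "real^2^2 \<Rightarrow> real" where
  "mtrace A = (\<Sum>i\<in>UNIV. A$i$i)"

definition Eh :: "pt set set \<Rightarrow> real \<Rightarrow> real \<Rightarrow> real \<Rightarrow> (pt \<Rightarrow> pt) \<Rightarrow> (pt \<Rightarrow> pt) \<Rightarrow> real" where
  "Eh T mu lam dl V W = integral (domain T) (\<lambda>x.
      2 * mu * frob (strain V x) (strain W x)
      + lam * mtrace (strain V x) * mtrace (strain W x) + dl * (V x \<bullet> W x))"

text \<open>Boundary integral of F (W . n) ds over the ccw polygon boundary. On the edge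
  e = x(i+1) - x(i) the outer unit normal is (e2, -e1)/|e| and ds = |e| ds_param.\<close>
definition bd_int :: "nat \<Rightarrow> (nat \<Rightarrow> pt) \<Rightarrow> (pt \<Rightarrow> real) \<Rightarrow> (pt \<Rightarrow> pt) \<Rightarrow> real" where
  "bd_int N X F W = (\<Sum>i=1..N.
     (let a = cyc N X i; e = cyc N X (i+1) - cyc N X i;
          nn = (vector [e$2, - (e$1)] :: pt)
      in integral {0..1::real} (\<lambda>s. F (a + s *\<^sub>R e) * (W (a + s *\<^sub>R e) \<bullet> nn))))"

definition Cc :: "nat \<Rightarrow> (nat \<Rightarrow> pt) \<Rightarrow> nat \<Rightarrow> real" where
  "Cc N X i = ((cyc N X (i-1))$1 - (cyc N X i)$1) * ((cyc N X (i+1))$2 - (cyc N X i)$2)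
            - ((cyc N X (i-1))$2 - (cyc N X i)$2) * ((cyc N X (i+1))$1 - (cyc N X i)$1)"

definition DCc :: "nat \<Rightarrow> (nat \<Rightarrow> pt) \<Rightarrow> nat \<Rightarrow> (nat \<Rightarrow> pt) \<Rightarrow> real" where
  "DCc N X i Y = deriv (\<lambda>t. Cc N (\<lambda>j. X j + t *\<^sub>R Y j) i) 0"

end

theory Submission
  imports Defs
begin


lemma Eh_pos:
  assumes mesh: "regular_triangulation T" and VS: "V \<in> S1vec T" and nz: "\<exists>x\<in>domain T. V x \<noteq> 0"
    and pos: "mu > 0" "lam > 0" "dl > 0"
  shows "Eh T mu lam dl V V > 0"
proof -
  define f where "f x = 2*mu*frob (strain V x) (strain V x) + lam*mtrace(strain V x)*mtrace(strain V x) + dl*(V x \<bullet> V x)" for x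
  have Eh_eq: "Eh T mu lam dl V V = integral (domain T) f" unfolding Eh_def f_def ..
  have fin: "finite T" using mesh unfolding regular_triangulation_def by blast
  have tri: "is_triangle K" if "K \<in> T" for K using mesh that unfolding regular_triangulation_def by blast
  have aff: "\<forall>K\<in>T. \<exists>A c. \<forall>x\<in>K. V x = A *v x + c"
  proof
    fix K assume K: "K \<in> T"
    have "\<forall>k. \<exists>a b. \<forall>x\<in>K. V x $ k = a \<bullet> x + b" using VS K unfolding S1vec_def S1_def by blast
    then obtain a b where ab: "\<forall>k. \<forall>x\<in>K. V x $ k = a k \<bullet> x + b k" by metis
    show "\<exists>A c. \<forall>x\<in>K. V x = A *v x + c"
      by (rule exI[of _ "\<chi> k. a k"], rule exI[of _ "\<chi> k. b k"]) (auto simp: vec_eq_iff matrix_vector_mul_component ab)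
  qed
  then obtain Am cv where Am: "\<And>K x. K\<in>T \<Longrightarrow> x\<in>K \<Longrightarrow> V x = Am K *v x + cv K" by metis
  define S0 where "S0 K = (1/2) *\<^sub>R (Am K + transpose (Am K))" for K
  define g where "g K x = 2*mu*frob (S0 K) (S0 K) + lam*mtrace (S0 K)*mtrace (S0 K) + dl*((Am K *v x + cv K) \<bullet> (Am K *v x + cv K))" for K x
  have gcont: "continuous_on UNIV (g K)" for K
    unfolding g_def by (intro continuous_intros linear_continuous_on matrix_vector_mul_linear bounded_linear_intros)
  have fg: "f x = g K x" if K: "K\<in>T" and x: "x \<in> interior K" for K x
  proof -
    have "((\<lambda>y. Am K *v y + cv K) has_derivative (\<lambda>h. Am K *v h)) (at x)"
      by (intro has_derivative_add_const bounded_linear_imp_has_derivative matrix_vector_mul_bounded_linear)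
    then have "(V has_derivative (\<lambda>h. Am K *v h)) (at x)"
      by (rule has_derivative_transform_within_open[OF _ open_interior x]) (metis Am[OF K] interior_subset subsetD)
    then have "jac V x = Am K" unfolding jac_def using frechet_derivative_at by (metis matrix_of_matrix_vector_mul)
    moreover have "V x = Am K *v x + cv K" using Am[OF K] x interior_subset by blast
    ultimately show "f x = g K x" unfolding f_def g_def strain_def S0_def by simp
  qed
  have fr: "frob A A \<ge> 0" for A unfolding frob_def by (intro sum_nonneg) simp
  have pq: "0 \<le> 2*mu*frob A A + lam*mtrace A*mtrace A" for A
  proof -
    have "0 \<le> 2*mu*frob A A" using fr[of A] pos by simp
    moreover have "0 \<le> lam*mtrace A*mtrace A" using pos by (simp add: mult.assoc)
    ultimately show ?thesis by linarith
  qed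
  have fnn: "f x \<ge> 0" for x
  proof -
    have "0 \<le> dl*(V x \<bullet> V x)" using pos by simp
    then show ?thesis unfolding f_def using pq[of "strain V x"] by linarith
  qed
  define U where "U = (\<Union>K\<in>T. interior K)"
  have openU: "open U" unfolding U_def by auto
  have Usub: "U \<subseteq> domain T" unfolding domain_def U_def using interior_subset by blast
  have compK: "compact K" "convex K" if "K \<in> T" for K
    using tri[OF that] unfolding is_triangle_def
    by (auto simp: convex_convex_hull intro!: compact_convex_hull[OF finite_imp_compact])
  have boundedU: "bounded U"
  proof -
    have "compact (domain T)" unfolding domain_def using fin compK by (intro compact_Union) auto
    then show ?thesis using Usub compact_imp_bounded bounded_subset by blast
  qed
  have negl: "negligible (domain T - U)"
  proof -
    have "domain T - U \<subseteq> (\<Union>K\<in>T. frontier K)"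
      unfolding domain_def U_def frontier_def using compK compact_imp_closed closure_closed by fastforce
    moreover have "negligible (\<Union>K\<in>T. frontier K)"
      using fin compK by (intro negligible_Union) (auto intro: negligible_convex_frontier)
    ultimately show ?thesis using negligible_subset by blast
  qed
  have fcontx: "isCont f x" if xU: "x \<in> U" for x
  proof -
    obtain K where K: "K \<in> T" "x \<in> interior K" using xU unfolding U_def by blast
    have ev: "eventually (\<lambda>y. f y = g K y) (nhds x)"
      using K fg eventually_nhds open_interior by blast
    have "isCont (g K) x" using gcont continuous_on_eq_continuous_at open_UNIV by blast
    then show ?thesis using isCont_cong[OF ev] by simp
  qed
  have fcont: "continuous_on U f" using fcontx continuous_at_imp_continuous_on by blast
  have "\<forall>K\<in>T. \<exists>B. \<forall>x\<in>K. \<bar>g K x\<bar> \<le> B"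
  proof
    fix K assume K: "K \<in> T"
    have "compact (g K ` K)" using compK(1)[OF K] gcont
      by (meson compact_continuous_image continuous_on_subset top_greatest)
    then show "\<exists>B. \<forall>x\<in>K. \<bar>g K x\<bar> \<le> B" using compact_imp_bounded bounded_iff
      by (metis image_eqI real_norm_def)
  qed
  then obtain BK where BK: "\<And>K x. K\<in>T \<Longrightarrow> x \<in> K \<Longrightarrow> \<bar>g K x\<bar> \<le> BK K" by metis
  define B where "B = (\<Sum>K\<in>T. \<bar>BK K\<bar>)"
  have fbd: "\<bar>f x\<bar> \<le> B" if xU: "x \<in> U" for x
  proof -
    obtain K where K: "K \<in> T" "x \<in> interior K" using xU unfolding U_def by blast
    have "\<bar>f x\<bar> \<le> BK K" using fg[OF K] BK[OF K(1)] K(2) interior_subset by auto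
    also have "\<dots> \<le> \<bar>BK K\<bar>" by simp
    also have "\<dots> \<le> B" unfolding B_def using fin K(1) by (intro member_le_sum) auto
    finally show ?thesis .
  qed
  have Uleb: "U \<in> sets lebesgue" using openU by (simp add: lebesgue_openin[of UNIV U])
  have fint: "f integrable_on U"
    by (rule measurable_bounded_by_integrable_imp_integrable_real[where g="\<lambda>_. B"])
       (use continuous_imp_measurable_on_sets_lebesgue[OF fcont Uleb]
            integrable_on_const[OF bounded_set_imp_lmeasurable[OF boundedU Uleb]] fbd Uleb in auto)
  have int_eq: "integral (domain T) f = integral U f"
  proof -
    have "(f has_integral (integral U f)) U" using fint by blast
    moreover have "{x \<in> U - domain T. f x \<noteq> 0} = {}" using Usub by auto
    then have n1: "negligible {x \<in> U - domain T. f x \<noteq> 0}" by (metis negligible_empty)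
    moreover have n2: "negligible {x \<in> domain T - U. f x \<noteq> 0}"
      by (rule negligible_subset[OF negl]) auto
    ultimately have "(f has_integral (integral U f)) (domain T)"
      using has_integral_spike_set_eq[OF n1 n2] by blast
    then show ?thesis by (rule integral_unique)
  qed
  obtain x0 where x0: "x0 \<in> domain T" "V x0 \<noteq> 0" using nz by blast
  then obtain K where K: "K \<in> T" "x0 \<in> K" unfolding domain_def by blast
  have intne: "interior K \<noteq> {}"
  proof -
    obtain a b c where abc: "K = convex hull {a,b,c}" "\<not> collinear {a,b,c}" using tri[OF K(1)] unfolding is_triangle_def by blast
    have "(1/3) *\<^sub>R a + (1/3) *\<^sub>R b + (1/3) *\<^sub>R c \<in> interior K"
    proof -
      have d2: "DIM(pt) = 2" by simp
      show ?thesis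
        unfolding abc(1) interior_convex_hull_3_minimal[OF abc(2) d2]
        by (intro CollectI exI[of _ "1/3::real"]) auto
    qed
    then show ?thesis by blast
  qed
  have clK: "closure (interior K) = K"
  proof -
    have "closure K = K" using compact_imp_closed[OF compK(1)[OF K(1)]] by (rule closure_closed)
    then show ?thesis using convex_closure_interior[OF compK(2)[OF K(1)] intne] by simp
  qed
  define h where "h y = Am K *v y + cv K" for y
  have hcont: "continuous_on UNIV h" unfolding h_def
    by (intro continuous_intros linear_continuous_on matrix_vector_mul_linear bounded_linear_intros)
  have hx0: "h x0 \<noteq> 0" using Am[OF K] x0 unfolding h_def by simp
  have openO: "open {y. h y \<noteq> 0}" using hcont by (intro open_Collect_neq) (auto intro: continuous_intros)
  have "{y. h y \<noteq> 0} \<inter> closure (interior K) \<noteq> {}" using hx0 clK K(2) by blast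
  then have "{y. h y \<noteq> 0} \<inter> interior K \<noteq> {}" using open_Int_closure_eq_empty[OF openO] by blast
  then obtain x1 where x1: "x1 \<in> interior K" "h x1 \<noteq> 0" by blast
  have x1U: "x1 \<in> U" using x1 K unfolding U_def by blast
  have "f x1 = g K x1" using fg[OF K(1) x1(1)] .
  moreover have "g K x1 \<ge> dl * (h x1 \<bullet> h x1)" unfolding g_def h_def using pq[of "S0 K"] by linarith
  moreover have "dl * (h x1 \<bullet> h x1) > 0" using pos x1(2) by simp
  ultimately have fx1: "f x1 > 0" by linarith
  define c where "c = f x1 / 2"
  have cpos: "c > 0" unfolding c_def using fx1 by simp
  obtain e where e: "e > 0" "\<And>y. dist y x1 < e \<Longrightarrow> dist (f y) (f x1) < c"
    using fcontx[OF x1U] cpos unfolding continuous_at_eps_delta by blast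
  obtain e2 where e2: "e2 > 0" "ball x1 e2 \<subseteq> interior K" using open_contains_ball[THEN iffD1, OF open_interior] x1(1) by blast
  define r where "r = min e e2"
  have rpos: "r > 0" unfolding r_def using e e2 by simp
  define Bl where "Bl = ball x1 r"
  have BlU: "Bl \<subseteq> U" unfolding Bl_def r_def U_def using e2 K(1) by auto
  define phi where "phi y = (if y \<in> Bl then c else 0)" for y
  have phiint: "phi integrable_on U" unfolding phi_def integrable_restrict_Int
    using BlU by (auto simp: Int_absorb2 Bl_def intro!: integrable_on_const)
  have phival: "integral U phi = c * measure lebesgue Bl"
  proof -
    have "integral U phi = integral Bl (\<lambda>y. c)" unfolding phi_def integral_restrict_Int
      using BlU by (simp add: Int_absorb2)
    also have "\<dots> = c * integral Bl (\<lambda>y. 1)" using integral_mult_right[of Bl c "\<lambda>y. 1"] by simp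
    also have "\<dots> = c * measure lebesgue Bl" using lmeasure_integral[of Bl] by (simp add: Bl_def)
    finally show ?thesis .
  qed
  have mBl: "measure lebesgue Bl > 0" unfolding Bl_def using rpos by simp
  have "integral U phi \<le> integral U f"
  proof (rule integral_le[OF phiint fint])
    fix y assume "y \<in> U"
    show "phi y \<le> f y"
    proof (cases "y \<in> Bl")
      case True
      then have "dist y x1 < e" unfolding Bl_def r_def by (simp add: dist_commute)
      then have "dist (f y) (f x1) < c" using e(2) by blast
      then have "f y > c" unfolding dist_real_def c_def by linarith
      then show ?thesis unfolding phi_def using True by simp
    next
      case False then show ?thesis unfolding phi_def using fnn by simp
    qed
  qed
  moreover have "integral U phi > 0" using phival mBl cpos by simp
  ultimately show ?thesis using Eh_eq int_eq by linarith
qed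

theorem mainTheorem4:
  fixes T :: "pt set set" and N :: nat and X :: "nat \<Rightarrow> pt"
    and t0 mu lam dl M :: real
    and ell :: "(pt \<Rightarrow> pt) \<Rightarrow> real"
    and V :: "pt \<Rightarrow> pt" and F :: "pt \<Rightarrow> real"
    and lm :: "nat \<Rightarrow> real" and W :: "pt \<Rightarrow> pt"
  assumes mesh: "regular_triangulation T"
    and simply_conn: "simply_connected (domain T)"
    and bdry: "ccw_boundary_vertices T N X"
    and pos: "t0 > 0" "mu > 0" "lam > 0" "dl > 0" "M > 0"
    and ell_lin: "\<forall>a b U U'. U \<in> S1vec T \<longrightarrow> U' \<in> S1vec T \<longrightarrow>
                    ell (\<lambda>x. a *\<^sub>R U x + b *\<^sub>R U' x) = a * ell U + b * ell U'"
    and feasV: "V \<in> S1vec T" "F \<in> S1bd N X"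
    and feas_conv: "\<forall>i\<in>{1..N}. Cc N X i + t0 * DCc N X i (\<lambda>j. V (X j)) \<le> 0"
    and feas_eq: "\<forall>U\<in>S1vec T. Eh T mu lam dl V U = bd_int N X F U"
    and optimal: "\<forall>V'\<in>S1vec T. \<forall>F'\<in>S1bd N X.
                    (\<forall>i\<in>{1..N}. Cc N X i + t0 * DCc N X i (\<lambda>j. V' (X j)) \<le> 0) \<longrightarrow>
                    (\<forall>U\<in>S1vec T. Eh T mu lam dl V' U = bd_int N X F' U) \<longrightarrow>
                    1/2 * Eh T mu lam dl V V + ell V \<le> 1/2 * Eh T mu lam dl V' V' + ell V'"
    and V_nonzero: "\<exists>x\<in>domain T. V x \<noteq> 0"
    and W_space: "W \<in> S1vec T"
    and mult_eq: "\<forall>dV\<in>S1vec T. Eh T mu lam dl V dV + ell dV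
                    + (\<Sum>i=1..N. lm i * t0 * DCc N X i (\<lambda>j. dV (X j)))
                    + Eh T mu lam dl dV W = 0"
    and mult_bd: "\<forall>dF\<in>S1bd N X. bd_int N X dF W = 0"
    and compl: "\<forall>i\<in>{1..N}. 0 \<le> lm i \<and>
                  lm i * (Cc N X i + t0 * DCc N X i (\<lambda>j. V (X j))) = 0"
    and M_big: "M \<ge> t0 * Max (lm ` {1..N})"
  shows "ell V + M * (\<Sum>i\<in>{i\<in>{1..N}. Cc N X i = 0}. max 0 (DCc N X i (\<lambda>j. V (X j))))
           + M * (\<Sum>i\<in>{i\<in>{1..N}. Cc N X i > 0}. DCc N X i (\<lambda>j. V (X j))) < 0"
proof -
  define C where "C i = Cc N X i" for i
  define D where "D i = DCc N X i (\<lambda>j. V (X j))" for i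
  have E0: "Eh T mu lam dl V W = 0"
    using feas_eq W_space mult_bd feasV(2) by auto
  have Epos: "Eh T mu lam dl V V > 0"
    using Eh_pos[OF mesh feasV(1) V_nonzero pos(2,3,4)] .
  have ellV: "ell V = - Eh T mu lam dl V V - (\<Sum>i=1..N. lm i * t0 * D i)"
    using mult_eq feasV(1) E0 unfolding D_def by force
  have lmD: "lm i * t0 * D i = - lm i * C i" if "i \<in> {1..N}" for i
  proof -
    have h: "lm i * (C i + t0 * D i) = 0" using compl that unfolding C_def D_def by blast
    show ?thesis using h by algebra
  qed
  have Nne: "{1..N} \<noteq> {}" using bdry unfolding ccw_boundary_vertices_def by auto
  have lmM: "t0 * lm i \<le> M" if "i \<in> {1..N}" for i
  proof -
    have "lm i \<le> Max (lm ` {1..N})" using that by auto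
    then show ?thesis using M_big pos(1) by (smt (verit) mult_left_mono)
  qed
  have Z: "(\<Sum>i\<in>{i\<in>{1..N}. C i = 0}. max 0 (D i)) = 0"
  proof (rule sum.neutral, clarify)
    fix i assume "i \<in> {1..N}" "C i = 0"
    then have "t0 * D i \<le> 0" using feas_conv unfolding C_def D_def by force
    then have "D i \<le> 0" using pos(1) by (simp add: mult_le_0_iff)
    then show "max 0 (D i) = 0" by simp
  qed
  have S1: "(\<Sum>i=1..N. lm i * C i) \<le> (\<Sum>i\<in>{i\<in>{1..N}. C i > 0}. lm i * C i)"
  proof -
    have "(\<Sum>i=1..N. lm i * C i) = (\<Sum>i\<in>{i\<in>{1..N}. C i > 0}. lm i * C i)
        + (\<Sum>i\<in>{i\<in>{1..N}. \<not> C i > 0}. lm i * C i)"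
      by (subst sum.union_disjoint[symmetric]) (auto intro!: sum.cong)
    moreover have "(\<Sum>i\<in>{i\<in>{1..N}. \<not> C i > 0}. lm i * C i) \<le> 0"
      using compl by (intro sum_nonpos) (auto simp: mult_nonneg_nonpos)
    ultimately show ?thesis by linarith
  qed
  have S2: "(\<Sum>i\<in>{i\<in>{1..N}. C i > 0}. lm i * C i + M * D i) \<le> 0"
  proof (rule sum_nonpos, clarify)
    fix i assume i: "i \<in> {1..N}" "C i > 0"
    have "C i + t0 * D i \<le> 0" using feas_conv i unfolding C_def D_def by force
    then have "M * C i + M * t0 * D i \<le> 0" using pos(5)
      by (metis distrib_left mult.assoc mult_nonneg_nonpos less_imp_le)
    moreover have "t0 * lm i * C i \<le> M * C i" using lmM[OF i(1)] i(2) by simp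
    ultimately have "t0 * (lm i * C i + M * D i) \<le> 0" by (simp add: algebra_simps)
    then show "lm i * C i + M * D i \<le> 0" using pos(1) by (simp add: mult_le_0_iff)
  qed
  have "- (\<Sum>i=1..N. lm i * t0 * D i) = (\<Sum>i=1..N. lm i * C i)"
    using lmD by (simp add: sum_negf[symmetric])
  then have "ell V + M * (\<Sum>i\<in>{i\<in>{1..N}. C i > 0}. D i)
      \<le> - Eh T mu lam dl V V + (\<Sum>i\<in>{i\<in>{1..N}. C i > 0}. lm i * C i + M * D i)"
    using ellV S1 by (simp add: sum.distrib sum_distrib_left)
  moreover have Z': "(\<Sum>i\<in>{i\<in>{1..N}. Cc N X i = 0}. max 0 (DCc N X i (\<lambda>j. V (X j)))) = 0"
    using Z unfolding C_def D_def .
  ultimately show ?thesis using S2 Epos unfolding C_def D_def by (simp only: Z' mult_zero_right add_0_right)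
qed

end
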